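(* Let $A$ be a nonempty finite set of $n$ alternatives and let $C$ be a capacity-wise lexicographic choice rule on $A$ with associated lists $\pi_q=(\succ^q_1,\dots,\succ^q_q)$, $q\in\{1,\dots,n\}$. If for each $q\in\{2,\dots,n\}$ the list $\pi_q$ is obtained by insertion from $\pi_{q-1}$, then $C$ satisfies monotonicity, i.e. $C(S,q)\subseteq C(S,q+1)$ for all nonempty $S\subseteq A$ and $q\in\{1,\dots,n-1\}$.
   Context: A choice rule assigns to each pair $(S,q)$, $S$ a nonempty subset of $A$ and $q\in\{1,\dots,n\}$, a nonempty $C(S,q)\subseteq S$ with $|C(S,q)|\le q$. A priority ordering is a complete, transitive, antisymmetric relation on $A$. $C$ is capacity-wise lexicographic with lists $\pi_q=(\succ^q_1,\dots,\succ^q_q)$ of priority orderings if for each $(S,q)$, $C(S,q)$ is obtained by choosing the $\succ^q_1$-highest element of $S$, then the $\succ^q_2$-highest among the remaining, and so on, until $q$ are chosen or none is left. A list $\pi'=(\succ'_1,\dots,\succ'_{q+1})$ is obtained by insertion from $\pi=(\succ_1,\dots,\succ_q)$ if there is $k\in\{1,\dots,q+1\}$ with $\succ'_l=\succ_l$ for all $l<k$ and $\succ'_l=\succ_{l-1}$ for all $l>k$. *)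

theory Defs
  imports Main
begin

text \<open>A priority ordering on A: a complete, transitive, antisymmetric relation on A
 (as a set of pairs; (x,y) \<in> r means x is weakly ranked above y).\<close>
definition priority_ordering :: "'a set \<Rightarrow> 'a rel \<Rightarrow> bool" where
  "priority_ordering A r \<longleftrightarrow> r \<subseteq> A \<times> A \<and>
     (\<forall>x\<in>A. \<forall>y\<in>A. (x,y) \<in> r \<or> (y,x) \<in> r) \<and>
     (\<forall>x y z. (x,y) \<in> r \<longrightarrow> (y,z) \<in> r \<longrightarrow> (x,z) \<in> r) \<and>
     (\<forall>x y. (x,y) \<in> r \<longrightarrow> (y,x) \<in> r \<longrightarrow> x = y)"

definition top_elem :: "'a rel \<Rightarrow> 'a set \<Rightarrow> 'a" where
  "top_elem r S = (THE x. x \<in> S \<and> (\<forall>y\<in>S. (x,y) \<in> r))"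

fun lex_choice :: "'a rel list \<Rightarrow> 'a set \<Rightarrow> 'a set" where
  "lex_choice [] S = {}"
| "lex_choice (r # rs) S =
     (if S = {} then {} else insert (top_elem r S) (lex_choice rs (S - {top_elem r S})))"

definition choice_rule :: "'a set \<Rightarrow> ('a set \<Rightarrow> nat \<Rightarrow> 'a set) \<Rightarrow> bool" where
  "choice_rule A C \<longleftrightarrow> (\<forall>S q. S \<noteq> {} \<and> S \<subseteq> A \<and> 1 \<le> q \<and> q \<le> card A \<longrightarrow>
       C S q \<noteq> {} \<and> C S q \<subseteq> S \<and> card (C S q) \<le> q)"

definition capacity_lexicographic ::
  "'a set \<Rightarrow> ('a set \<Rightarrow> nat \<Rightarrow> 'a set) \<Rightarrow> (nat \<Rightarrow> 'a rel list) \<Rightarrow> bool" where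
  "capacity_lexicographic A C \<pi> \<longleftrightarrow>
     (\<forall>q\<in>{1..card A}. length (\<pi> q) = q \<and> (\<forall>r\<in>set (\<pi> q). priority_ordering A r) \<and>
        (\<forall>S. S \<noteq> {} \<and> S \<subseteq> A \<longrightarrow> C S q = lex_choice (\<pi> q) S))"

text \<open>\<pi>' (length q+1) is obtained by insertion from \<pi> (length q), with 1-based indices
 (element l of a list xs is xs ! (l-1)).\<close>
definition obtained_by_insertion :: "'b list \<Rightarrow> 'b list \<Rightarrow> bool" where
  "obtained_by_insertion \<pi>' \<pi> \<longleftrightarrow> length \<pi>' = length \<pi> + 1 \<and>
     (\<exists>k\<in>{1..length \<pi> + 1}.
        (\<forall>l\<in>{1..length \<pi> + 1}. l < k \<longrightarrow> \<pi>' ! (l - 1) = \<pi> ! (l - 1)) \<and>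
        (\<forall>l\<in>{1..length \<pi> + 1}. l > k \<longrightarrow> \<pi>' ! (l - 1) = \<pi> ! (l - 2)))"

end

theory Submission
  imports Defs
begin

lemma po_total: "priority_ordering A r \<Longrightarrow> x \<in> A \<Longrightarrow> y \<in> A \<Longrightarrow> (x,y) \<in> r \<or> (y,x) \<in> r"
  unfolding priority_ordering_def by simp

lemma po_trans: "priority_ordering A r \<Longrightarrow> (x,y) \<in> r \<Longrightarrow> (y,z) \<in> r \<Longrightarrow> (x,z) \<in> r"
  unfolding priority_ordering_def by simp

lemma po_antisym: "priority_ordering A r \<Longrightarrow> (x,y) \<in> r \<Longrightarrow> (y,x) \<in> r \<Longrightarrow> x = y"
  unfolding priority_ordering_def by simp

lemma top_unique:
  assumes "priority_ordering A r" "x \<in> T" "\<forall>y\<in>T. (x,y) \<in> r"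
  shows "top_elem r T = x"
  unfolding top_elem_def
proof (rule the_equality)
  show "x \<in> T \<and> (\<forall>y\<in>T. (x, y) \<in> r)" using assms by simp
next
  fix z assume z: "z \<in> T \<and> (\<forall>y\<in>T. (z, y) \<in> r)"
  then have "(z,x) \<in> r" "(x,z) \<in> r" using assms by auto
  then show "z = x" using po_antisym[OF assms(1)] by simp
qed

lemma top_exists:
  assumes "priority_ordering A r" "finite T" "T \<subseteq> A" "T \<noteq> {}"
  shows "\<exists>x\<in>T. \<forall>y\<in>T. (x,y) \<in> r"
  using assms(2,4,3)
proof (induction T rule: finite_ne_induct)
  case (singleton x)
  then show ?case using po_total[OF assms(1), of x x] by simp
next
  case (insert a F)
  then obtain x where x: "x \<in> F" "\<forall>y\<in>F. (x,y) \<in> r" by auto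
  have "(x,a) \<in> r \<or> (a,x) \<in> r" using po_total[OF assms(1), of x a] insert x by auto
  then show ?case
  proof
    assume "(x,a) \<in> r" then show ?thesis using x by auto
  next
    assume h: "(a,x) \<in> r"
    have "\<forall>y\<in>insert a F. (a,y) \<in> r"
    proof
      fix y assume "y \<in> insert a F"
      then show "(a,y) \<in> r"
      proof
        assume "y = a" then show ?thesis using po_total[OF assms(1), of a a] insert by auto
      next
        assume "y \<in> F" then show ?thesis using h x po_trans[OF assms(1), of a x y] by auto
      qed
    qed
    then show ?thesis by auto
  qed
qed

lemma top_prop:
  assumes "priority_ordering A r" "finite T" "T \<subseteq> A" "T \<noteq> {}"
  shows "top_elem r T \<in> T \<and> (\<forall>y\<in>T. (top_elem r T,y) \<in> r)"
  using top_exists[OF assms] top_unique[OF assms(1)] by metis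

lemma lex_empty[simp]: "lex_choice rs {} = {}"
  by (cases rs) auto

lemma lex_remove:
  assumes "\<forall>r\<in>set rs. priority_ordering A r" "finite T" "T \<subseteq> A"
  shows "lex_choice rs T \<subseteq> insert x (lex_choice rs (T - {x}))"
  using assms
proof (induction rs arbitrary: T x)
  case Nil
  then show ?case by simp
next
  case (Cons r rs)
  show ?case
  proof (cases "T = {}")
    case True then show ?thesis by simp
  next
    case False
    define t where "t = top_elem r T"
    have po: "priority_ordering A r" using Cons.prems by simp
    have tp: "t \<in> T" "\<forall>y\<in>T. (t,y) \<in> r" using top_prop[OF po Cons.prems(2,3) False] t_def by auto
    have L: "lex_choice (r#rs) T = insert t (lex_choice rs (T - {t}))"
      using False t_def by simp
    show ?thesis
    proof (cases "t = x")
      case True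
      show ?thesis
      proof (cases "T - {x} = {}")
        case True2: True
        then have "lex_choice rs (T - {x}) = {}" by (simp only: lex_empty)
        then show ?thesis using L True True2 by simp
      next
        case False2: False
        define y where "y = top_elem r (T - {x})"
        have "lex_choice rs (T - {x}) \<subseteq> insert y (lex_choice rs (T - {x} - {y}))"
          using Cons.IH[of "T - {x}" y] Cons.prems by auto
        moreover have "lex_choice (r#rs) (T - {x}) = insert y (lex_choice rs (T - {x} - {y}))"
          using False2 y_def by simp
        ultimately show ?thesis using L True by auto
      qed
    next
      case False3: False
      have "top_elem r (T - {x}) = t"
        using top_unique[OF po, of t "T - {x}"] tp False3 by auto
      moreover have "T - {x} \<noteq> {}" using tp False3 by auto
      ultimately have R: "lex_choice (r#rs) (T - {x}) = insert t (lex_choice rs (T - {x} - {t}))"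
        by simp
      have "lex_choice rs (T - {t}) \<subseteq> insert x (lex_choice rs (T - {t} - {x}))"
        using Cons.IH[of "T - {t}" x] Cons.prems by auto
      moreover have "T - {t} - {x} = T - {x} - {t}" by auto
      ultimately show ?thesis using L R by auto
    qed
  qed
qed

lemma lex_insert:
  assumes "\<forall>r\<in>set ys. priority_ordering A r" "finite T" "T \<subseteq> A"
  shows "lex_choice (xs @ ys) T \<subseteq> lex_choice (xs @ [r'] @ ys) T"
  using assms
proof (induction xs arbitrary: T)
  case Nil
  show ?case using lex_remove[OF Nil.prems, of "top_elem r' T"] by auto
next
  case (Cons a xs)
  have "lex_choice (xs @ ys) (T - {top_elem a T}) \<subseteq> lex_choice (xs @ [r'] @ ys) (T - {top_elem a T})"
    using Cons.IH Cons.prems by auto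
  then show ?case by auto
qed

lemma insertion_decomp:
  assumes "obtained_by_insertion p' p"
  shows "\<exists>k r'. k \<le> length p \<and> p' = take k p @ [r'] @ drop k p"
proof -
  obtain k where k: "k \<in> {1..length p + 1}"
    "\<forall>l\<in>{1..length p + 1}. l < k \<longrightarrow> p' ! (l - 1) = p ! (l - 1)"
    "\<forall>l\<in>{1..length p + 1}. l > k \<longrightarrow> p' ! (l - 1) = p ! (l - 2)"
    and len: "length p' = length p + 1"
    using assms unfolding obtained_by_insertion_def by blast
  have "p' = take (k-1) p @ [p' ! (k-1)] @ drop (k-1) p"
  proof (rule nth_equalityI)
    show "length p' = length (take (k-1) p @ [p' ! (k-1)] @ drop (k-1) p)"
      using k(1) len by auto
  next
    fix i assume i: "i < length p'"
    consider "i < k - 1" | "i = k - 1" | "i > k - 1" by linarith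
    then show "p' ! i = (take (k-1) p @ [p' ! (k-1)] @ drop (k-1) p) ! i"
    proof cases
      case 1
      then have "p' ! i = p ! i" using k(2)[rule_format, of "i+1"] i len by auto
      then show ?thesis using 1 k(1) by (auto simp: nth_append)
    next
      case 2
      then show ?thesis using k(1) by (auto simp: nth_append)
    next
      case 3
      then have "p' ! i = p ! (i - 1)" using k(3)[rule_format, of "i+1"] i len by auto
      then show ?thesis using 3 k(1) i len by (auto simp: nth_append)
    qed
  qed
  then show ?thesis using k(1) by (intro exI[of _ "k-1"]) auto
qed

theorem lemma2:
  fixes A :: "'a set" and C :: "'a set \<Rightarrow> nat \<Rightarrow> 'a set" and \<pi> :: "nat \<Rightarrow> 'a rel list"
  assumes "finite A" and "A \<noteq> {}"
    and "choice_rule A C"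
    and "capacity_lexicographic A C \<pi>"
    and "\<forall>q\<in>{2..card A}. obtained_by_insertion (\<pi> q) (\<pi> (q - 1))"
  shows "\<forall>S q. S \<noteq> {} \<and> S \<subseteq> A \<and> 1 \<le> q \<and> q \<le> card A - 1 \<longrightarrow> C S q \<subseteq> C S (q + 1)"
proof (intro allI impI)
  fix S q assume h: "S \<noteq> {} \<and> S \<subseteq> A \<and> 1 \<le> q \<and> q \<le> card A - 1"
  have q1: "q \<in> {1..card A}" "q + 1 \<in> {1..card A}" using h by auto
  have "q + 1 \<in> {2..card A}" using h by auto
  then have "obtained_by_insertion (\<pi> (q+1)) (\<pi> (q+1-1))" using assms(5) by blast
  then have "obtained_by_insertion (\<pi> (q+1)) (\<pi> q)" by simp
  then obtain k r' where kr: "\<pi> (q+1) = take k (\<pi> q) @ [r'] @ drop k (\<pi> q)"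
    using insertion_decomp by blast
  have po: "\<forall>r\<in>set (\<pi> q). priority_ordering A r"
    using assms(4) q1 unfolding capacity_lexicographic_def by blast
  have fS: "finite S" using h assms(1) finite_subset by blast
  have "lex_choice (take k (\<pi> q) @ drop k (\<pi> q)) S \<subseteq> lex_choice (\<pi> (q+1)) S"
    unfolding kr by (rule lex_insert[of _ A]) (use po h fS in \<open>auto dest: in_set_dropD\<close>)
  moreover have "C S q = lex_choice (\<pi> q) S" "C S (q+1) = lex_choice (\<pi> (q+1)) S"
    using assms(4) q1 h unfolding capacity_lexicographic_def by blast+
  ultimately show "C S q \<subseteq> C S (q + 1)" by simp
qed

end
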